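(* Let $(M,J,c)$ be a conformal Hermitian structure of dimension $n\ge4$, i.e. a conformal almost Hermitian structure with $N_J=0$. Then $G^c_-=0$ and the connection $\nabla^{gc}$ has Hermitian torsion, i.e. its torsion $T$ satisfies $T(JX,JY)=T(X,Y)$.
   Context: A conformal almost Hermitian structure $(M,J,c)$: $J$ almost complex ($J^2=-\mathrm{id}$), $c$ a conformal class of Riemannian metrics for which $J$ is orthogonal. For $g\in c$ with Levi-Civita connection $\nabla$, $B_a:=\frac1{n-2}J^c{}_b\nabla_cJ^b{}_a$ and $\nabla^c_aY^b:=\nabla_aY^b-B_aY^b+B^bY_a-B_cY^c\delta^b_a$ (independent of $g\in c$; the unique torsion-free connection with $\nabla^cg=2B\otimes g$ and $\nabla^c_aJ^a{}_b=0$). $G^c(X,Y):=-\frac12J(\nabla^c_YJ)X$, $G^c_-(X,Y):=\frac12(G^c(X,Y)-G^c(JX,JY))$, $\nabla^{gc}_XY:=\nabla^c_XY+G^c(Y,X)$. $N_J(X,Y):=\frac14([JX,JY]-J[JX,Y]-J[X,JY]-[X,Y])$; torsion $T(X,Y)=D_XY-D_YX-[X,Y]$. *)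

theory Defs
  imports "HOL-Analysis.Analysis"
begin

text \<open>Local coordinate rendering: an open set U of real^'n (a chart of M),
  a metric g in the conformal class (components g x i j = g_ij(x)) and an almost complex
  structure J (components J x a b = J^a_b(x)).\<close>

type_synonym 'n tens2 = "real^'n \<Rightarrow> 'n \<Rightarrow> 'n \<Rightarrow> real"
type_synonym 'n vfield = "real^'n \<Rightarrow> real^'n"

definition kdelta :: "'a \<Rightarrow> 'a \<Rightarrow> real" where
  "kdelta a b = (if a = b then 1 else 0)"

definition pd :: "(real^'n::finite \<Rightarrow> real) \<Rightarrow> 'n \<Rightarrow> real^'n \<Rightarrow> real" where
  "pd f i x = frechet_derivative f (at x) (axis i 1)"

fun Ck :: "nat \<Rightarrow> (real^'n::finite \<Rightarrow> real) \<Rightarrow> (real^'n) set \<Rightarrow> bool" where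
  "Ck 0 f U = continuous_on U f"
| "Ck (Suc k) f U = (f differentiable_on U \<and> (\<forall>i. Ck k (pd f i) U))"

definition smooth_fun :: "(real^'n::finite \<Rightarrow> real) \<Rightarrow> (real^'n) set \<Rightarrow> bool" where
  "smooth_fun f U = (\<forall>k. Ck k f U)"

definition smooth_field :: "'n::finite vfield \<Rightarrow> (real^'n) set \<Rightarrow> bool" where
  "smooth_field X U = (\<forall>k. smooth_fun (\<lambda>y. X y $ k) U)"

definition smooth_tens :: "'n::finite tens2 \<Rightarrow> (real^'n) set \<Rightarrow> bool" where
  "smooth_tens T U = (\<forall>i j. smooth_fun (\<lambda>y. T y i j) U)"

definition ginv :: "'n::finite tens2 \<Rightarrow> real^'n \<Rightarrow> 'n \<Rightarrow> 'n \<Rightarrow> real" where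
  "ginv g x i j = matrix_inv (\<chi> a b. g x a b) $ i $ j"

text \<open>Christoffel symbols of the Levi-Civita connection: LC g x k i j = Gamma^k_{ij}.\<close>
definition LC :: "'n::finite tens2 \<Rightarrow> real^'n \<Rightarrow> 'n \<Rightarrow> 'n \<Rightarrow> 'n \<Rightarrow> real" where
  "LC g x k i j = (1/2) * (\<Sum>l\<in>UNIV. ginv g x k l *
      (pd (\<lambda>y. g y j l) i x + pd (\<lambda>y. g y i l) j x - pd (\<lambda>y. g y i j) l x))"

text \<open>(nabla_c J)^b_a for the Levi-Civita connection.\<close>
definition nablaJ :: "'n::finite tens2 \<Rightarrow> 'n tens2 \<Rightarrow> real^'n \<Rightarrow> 'n \<Rightarrow> 'n \<Rightarrow> 'n \<Rightarrow> real" where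
  "nablaJ g J x c b a = pd (\<lambda>y. J y b a) c x
      + (\<Sum>d\<in>UNIV. LC g x b c d * J x d a) - (\<Sum>d\<in>UNIV. LC g x d c a * J x b d)"

definition Blow :: "'n::finite tens2 \<Rightarrow> 'n tens2 \<Rightarrow> real^'n \<Rightarrow> 'n \<Rightarrow> real" where
  "Blow g J x a = (1 / (real CARD('n) - 2)) *
      (\<Sum>b\<in>UNIV. \<Sum>c\<in>UNIV. J x c b * nablaJ g J x c b a)"

definition Bup :: "'n::finite tens2 \<Rightarrow> 'n tens2 \<Rightarrow> real^'n \<Rightarrow> 'n \<Rightarrow> real" where
  "Bup g J x b = (\<Sum>d\<in>UNIV. ginv g x b d * Blow g J x d)"

text \<open>Christoffel symbols of nabla^c:
  nabla^c_a Y^b = nabla_a Y^b - B_a Y^b + B^b Y_a - B_d Y^d delta^b_a, i.e. GamC g J x b a d.\<close>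
definition GamC :: "'n::finite tens2 \<Rightarrow> 'n tens2 \<Rightarrow> real^'n \<Rightarrow> 'n \<Rightarrow> 'n \<Rightarrow> 'n \<Rightarrow> real" where
  "GamC g J x b a d = LC g x b a d - Blow g J x a * kdelta b d
      + Bup g J x b * g x a d - Blow g J x d * kdelta b a"

text \<open>(nabla^c_a J)^b_e.\<close>
definition nablacJ :: "'n::finite tens2 \<Rightarrow> 'n tens2 \<Rightarrow> real^'n \<Rightarrow> 'n \<Rightarrow> 'n \<Rightarrow> 'n \<Rightarrow> real" where
  "nablacJ g J x a b e = pd (\<lambda>y. J y b e) a x
      + (\<Sum>d\<in>UNIV. GamC g J x b a d * J x d e) - (\<Sum>d\<in>UNIV. GamC g J x d a e * J x b d)"

definition Jv :: "'n::finite tens2 \<Rightarrow> real^'n \<Rightarrow> real^'n \<Rightarrow> real^'n" where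
  "Jv J x v = (\<chi> k. \<Sum>b\<in>UNIV. J x k b * v $ b)"

text \<open>G^c(X,Y) = -1/2 J (nabla^c_Y J) X at the point x.\<close>
definition Gc :: "'n::finite tens2 \<Rightarrow> 'n tens2 \<Rightarrow> real^'n \<Rightarrow> real^'n \<Rightarrow> real^'n \<Rightarrow> real^'n" where
  "Gc g J x v w = (\<chi> k. - (1/2) * (\<Sum>b\<in>UNIV. \<Sum>e\<in>UNIV. \<Sum>a\<in>UNIV.
      J x k b * (w $ a * nablacJ g J x a b e) * v $ e))"

definition Gcminus :: "'n::finite tens2 \<Rightarrow> 'n tens2 \<Rightarrow> real^'n \<Rightarrow> real^'n \<Rightarrow> real^'n \<Rightarrow> real^'n" where
  "Gcminus g J x v w = (1/2) *\<^sub>R (Gc g J x v w - Gc g J x (Jv J x v) (Jv J x w))"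

definition Jfield :: "'n::finite tens2 \<Rightarrow> 'n vfield \<Rightarrow> 'n vfield" where
  "Jfield J X = (\<lambda>x. Jv J x (X x))"

definition lie :: "'n::finite vfield \<Rightarrow> 'n vfield \<Rightarrow> 'n vfield" where
  "lie X Y x = (\<chi> b. \<Sum>a\<in>UNIV. X x $ a * pd (\<lambda>y. Y y $ b) a x - Y x $ a * pd (\<lambda>y. X y $ b) a x)"

definition conn_c :: "'n::finite tens2 \<Rightarrow> 'n tens2 \<Rightarrow> 'n vfield \<Rightarrow> 'n vfield \<Rightarrow> 'n vfield" where
  "conn_c g J X Y x = (\<chi> b. (\<Sum>a\<in>UNIV. X x $ a * pd (\<lambda>y. Y y $ b) a x)
      + (\<Sum>a\<in>UNIV. \<Sum>d\<in>UNIV. GamC g J x b a d * X x $ a * Y x $ d))"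

definition conn_gc :: "'n::finite tens2 \<Rightarrow> 'n tens2 \<Rightarrow> 'n vfield \<Rightarrow> 'n vfield \<Rightarrow> 'n vfield" where
  "conn_gc g J X Y x = conn_c g J X Y x + Gc g J x (Y x) (X x)"

definition torsion :: "('n::finite vfield \<Rightarrow> 'n vfield \<Rightarrow> 'n vfield) \<Rightarrow> 'n vfield \<Rightarrow> 'n vfield \<Rightarrow> 'n vfield" where
  "torsion D X Y x = D X Y x - D Y X x - lie X Y x"

definition nijenhuis :: "'n::finite tens2 \<Rightarrow> 'n vfield \<Rightarrow> 'n vfield \<Rightarrow> 'n vfield" where
  "nijenhuis J X Y x = (1/4) *\<^sub>R (lie (Jfield J X) (Jfield J Y) x
      - Jv J x (lie (Jfield J X) Y x) - Jv J x (lie X (Jfield J Y) x) - lie X Y x)"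

text \<open>Conformal almost Hermitian structure on the chart U (g any representative of c).\<close>
definition conf_almost_hermitian :: "(real^'n::finite) set \<Rightarrow> 'n tens2 \<Rightarrow> 'n tens2 \<Rightarrow> bool" where
  "conf_almost_hermitian U g J \<longleftrightarrow> open U \<and> smooth_tens g U \<and> smooth_tens J U
    \<and> (\<forall>x\<in>U. \<forall>i j. g x i j = g x j i)
    \<and> (\<forall>x\<in>U. \<forall>v. v \<noteq> 0 \<longrightarrow> (\<Sum>i\<in>UNIV. \<Sum>j\<in>UNIV. g x i j * v $ i * v $ j) > 0)
    \<and> (\<forall>x\<in>U. \<forall>a c. (\<Sum>b\<in>UNIV. J x a b * J x b c) = - kdelta a c)
    \<and> (\<forall>x\<in>U. \<forall>a b. (\<Sum>c\<in>UNIV. \<Sum>d\<in>UNIV. g x c d * J x c a * J x d b) = g x a b)"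

end

theory Submission
  imports Defs
begin


lemma Ck_const: "Ck k (\<lambda>y. c) (U::(real^'n::finite) set)"
proof (induction k arbitrary: c)
  case 0 then show ?case by simp
next
  case (Suc k)
  have "pd (\<lambda>y::real^'n. c) i = (\<lambda>x. 0)" for i by (rule ext) (simp add: pd_def)
  then have "\<forall>i. Ck k (pd (\<lambda>y. c) i) U" using Suc.IH[of 0] by simp
  then show ?case by simp
qed

lemma smooth_const_field: "smooth_field (\<lambda>y. v) U"
  unfolding smooth_field_def smooth_fun_def using Ck_const by blast

lemma smooth_diff: assumes "smooth_fun f U" "open U" "x \<in> U" shows "f differentiable at x"
proof -
  have "Ck (Suc 0) f U" using assms(1) unfolding smooth_fun_def by blast
  then have "f differentiable_on U" by simp
  then show ?thesis using assms differentiable_on_eq_differentiable_at by blast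
qed

lemma pd_works: "f differentiable at x \<Longrightarrow> (f has_derivative frechet_derivative f (at x)) (at x)"
  by (simp add: frechet_derivative_works)

lemma pd_eq_open: assumes "f differentiable at x" "open X" "x \<in> X" "\<And>y. y \<in> X \<Longrightarrow> f y = h y"
  shows "pd f i x = pd h i x"
  unfolding pd_def using frechet_derivative_transform_within_open[OF assms] by simp

lemma pd_const_open: assumes "open X" "x \<in> X" "\<And>y. y \<in> X \<Longrightarrow> f y = c"
  shows "pd f i x = 0"
proof -
  have "pd (\<lambda>y. c) i x = pd f i x"
    by (rule pd_eq_open) (use assms in auto)
  then show ?thesis by (simp add: pd_def)
qed

lemma pd_mult: assumes "f differentiable at x" "h differentiable at x"
  shows "pd (\<lambda>y. f y * h y) i x = f x * pd h i x + pd f i x * h x"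
proof -
  have "((\<lambda>y. f y * h y) has_derivative (\<lambda>v. f x * frechet_derivative h (at x) v + frechet_derivative f (at x) v * h x)) (at x)"
    using has_derivative_mult[OF pd_works[OF assms(1)] pd_works[OF assms(2)]] by simp
  from frechet_derivative_at[OF this] show ?thesis unfolding pd_def by metis
qed

lemma pd_sum: assumes "\<And>e. f e differentiable at x"
  shows "pd (\<lambda>y. \<Sum>e\<in>(S::'b set). f e y) i x = (\<Sum>e\<in>S. pd (f e) i x)"
proof -
  have "((\<lambda>y. \<Sum>e\<in>S. f e y) has_derivative (\<lambda>v. \<Sum>e\<in>S. frechet_derivative (f e) (at x) v)) (at x)"
    by (rule has_derivative_sum) (use pd_works assms in auto)
  from frechet_derivative_at[OF this] show ?thesis unfolding pd_def by metis
qed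

lemma pd_cmult: assumes "f differentiable at x"
  shows "pd (\<lambda>y. f y * c) i x = pd f i x * c"
proof -
  have "((\<lambda>y. f y * c) has_derivative (\<lambda>v. frechet_derivative f (at x) v * c)) (at x)"
    by (rule has_derivative_mult_left) (use pd_works assms in auto)
  from frechet_derivative_at[OF this] show ?thesis unfolding pd_def by metis
qed

lemma pd_sum_mult_diff: assumes "\<And>e. f e differentiable at x" "\<And>e. h e differentiable at x"
  shows "pd (\<lambda>y. \<Sum>e\<in>(S::'b set). f e y * h e y) i x = (\<Sum>e\<in>S. f e x * pd (h e) i x + pd (f e) i x * h e x)"
proof -
  have "pd (\<lambda>y. \<Sum>e\<in>(S::'b set). f e y * h e y) i x = (\<Sum>e\<in>S. pd (\<lambda>y. f e y * h e y) i x)"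
    by (rule pd_sum) (use assms differentiable_mult in auto)
  also have "\<dots> = (\<Sum>e\<in>S. f e x * pd (h e) i x + pd (f e) i x * h e x)"
    by (rule sum.cong[OF refl], rule pd_mult) (use assms in auto)
  finally show ?thesis .
qed



lemma mv_neg: "(M::real^'n^'m) *v (- u) = - (M *v u)"
  by (simp add: vec_eq_iff matrix_vector_mult_def sum_negf)
lemma mv_diff: "(M::real^'n^'m) *v (u - v) = M *v u - M *v v"
  by (simp add: vec_eq_iff matrix_vector_mult_def sum_subtractf algebra_simps)
lemma mv_add: "(M::real^'n^'m) *v (u + v) = M *v u + M *v v"
  by (simp add: vec_eq_iff matrix_vector_mult_def sum.distrib algebra_simps)

lemma abstract_core:
  fixes Jm Gm :: "real^'n^'n" and A :: "real^'n \<Rightarrow> real^'n^'n"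
  assumes J2: "\<And>u. Jm *v (Jm *v u) = -u"
    and Gsym: "\<And>u v. u \<bullet> (Gm *v v) = v \<bullet> (Gm *v u)"
    and Gpos: "\<And>u. u \<noteq> 0 \<Longrightarrow> u \<bullet> (Gm *v u) > 0"
    and Jskew: "\<And>u v. (Jm *v u) \<bullet> (Gm *v v) = - (u \<bullet> (Gm *v (Jm *v v)))"
    and Ai: "\<And>y u. Jm *v (A y *v u) = - (A y *v (Jm *v u))"
    and Aii: "\<And>y u v. (A y *v u) \<bullet> (Gm *v v) = - (u \<bullet> (Gm *v (A y *v v)))"
    and Aiii: "\<And>v w. A (Jm *v v) *v w - A (Jm *v w) *v v + Jm *v (A w *v v) - Jm *v (A v *v w) = 0"
  shows "A (Jm *v w) *v (Jm *v v) = A w *v v"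
proof -
  define ip where "ip u v = u \<bullet> (Gm *v v)" for u v
  have ipd: "ip (a - b) c = ip a c - ip b c" for a b c by (simp add: ip_def inner_diff_left)
  have ipn: "ip a (- c) = - ip a c" for a c by (simp add: ip_def mv_neg)
  define S where "S y x = A (Jm *v y) *v x - Jm *v (A y *v x)" for y x
  have Ssym: "S y x = S x y" for x y
    using Aiii[of x y] unfolding S_def by (simp add: algebra_simps)
  have anti: "ip (S y x) z = - ip (S y z) x" for y x z
  proof -
    have 1: "ip (A (Jm *v y) *v x) z = - ip (A (Jm *v y) *v z) x"
      using Aii Gsym unfolding ip_def by metis
    have "ip (Jm *v (A y *v x)) z = - ip (A y *v x) (Jm *v z)"
      using Jskew unfolding ip_def by metis
    also have "\<dots> = ip x (A y *v (Jm *v z))" using Aii unfolding ip_def by simp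
    also have "\<dots> = - ip x (Jm *v (A y *v z))"
    proof -
      have "A y *v (Jm *v z) = - (Jm *v (A y *v z))" using Ai[of y z] by simp
      then show ?thesis by (simp add: ipn)
    qed
    also have "\<dots> = - ip (Jm *v (A y *v z)) x" using Gsym unfolding ip_def by metis
    finally have 2: "ip (Jm *v (A y *v x)) z = - ip (Jm *v (A y *v z)) x" .
    show ?thesis unfolding S_def ipd 1 2 by simp
  qed
  have T0: "ip (S y x) z = 0" for y x z
  proof -
    have "ip (S y x) z = ip (S x y) z" by (simp add: Ssym)
    also have "\<dots> = - ip (S x z) y" by (rule anti)
    also have "\<dots> = - ip (S z x) y" by (simp add: Ssym)
    also have "\<dots> = ip (S z y) x" using anti[of z x y] by simp
    also have "\<dots> = ip (S y z) x" by (simp add: Ssym)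
    also have "\<dots> = - ip (S y x) z" using anti[of y z x] by simp
    finally show ?thesis by simp
  qed
  have S0: "S y x = 0" for y x
    using T0[of y x "S y x"] Gpos[of "S y x"] unfolding ip_def by (metis less_irrefl)
  have "A (Jm *v w) *v (Jm *v v) = Jm *v (A w *v (Jm *v v))"
    using S0[of w "Jm *v v"] unfolding S_def by simp
  also have "\<dots> = Jm *v (- (Jm *v (A w *v v)))" using Ai by simp
  also have "\<dots> = A w *v v" by (simp add: mv_neg J2)
  finally show ?thesis .
qed



lemma E1: "u \<bullet> ((N::real^'n^'n) *v v) = (\<Sum>b\<in>UNIV. \<Sum>d\<in>UNIV. u$b * v$d * N$b$d)"
  by (simp add: inner_vec_def matrix_vector_mult_def sum_distrib_left algebra_simps)

lemma E2: "((M::real^'n^'n) *v u) \<bullet> ((N::real^'n^'n) *v v) = (\<Sum>b\<in>UNIV. \<Sum>d\<in>UNIV. u$b * v$d * (\<Sum>c\<in>UNIV. M$c$b * N$c$d))"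
proof -
  have "((M::real^'n^'n) *v u) \<bullet> ((N::real^'n^'n) *v v) = (\<Sum>c\<in>UNIV. \<Sum>b\<in>UNIV. \<Sum>d\<in>UNIV. u$b * v$d * (M$c$b * N$c$d))"
    by (simp add: inner_vec_def matrix_vector_mult_def sum_distrib_left sum_distrib_right algebra_simps, subst sum.swap, simp)
  also have "\<dots> = (\<Sum>b\<in>UNIV. \<Sum>c\<in>UNIV. \<Sum>d\<in>UNIV. u$b * v$d * (M$c$b * N$c$d))" by (rule sum.swap)
  also have "\<dots> = (\<Sum>b\<in>UNIV. \<Sum>d\<in>UNIV. \<Sum>c\<in>UNIV. u$b * v$d * (M$c$b * N$c$d))" by (rule sum.cong[OF refl], rule sum.swap)
  finally show ?thesis by (simp add: sum_distrib_left)
qed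

lemma mv_assoc: "(M::real^'n^'n) *v ((K::real^'n^'n) *v v) = (M ** K) *v v"
  by (simp add: matrix_vector_mul_assoc)

lemma mm_entry: "((M::real^'n^'n) ** (K::real^'n^'n))$c$d = (\<Sum>e\<in>UNIV. M$c$e * K$e$d)"
  by (simp add: matrix_matrix_mult_def)

lemma E3: "((M::real^'n^'n) *v u) \<bullet> ((N::real^'n^'n) *v ((K::real^'n^'n) *v v)) = (\<Sum>b\<in>UNIV. \<Sum>d\<in>UNIV. u$b * v$d * (\<Sum>c\<in>UNIV. \<Sum>e\<in>UNIV. M$c$b * N$c$e * K$e$d))"
  unfolding mv_assoc E2 mm_entry by (simp add: sum_distrib_left mult.assoc)

lemma E4: "u \<bullet> ((N::real^'n^'n) *v ((K::real^'n^'n) *v v)) = (\<Sum>b\<in>UNIV. \<Sum>d\<in>UNIV. u$b * v$d * (\<Sum>c\<in>UNIV. N$b$c * K$c$d))"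
  unfolding mv_assoc E1 mm_entry by simp

lemma dsum_add: "(\<Sum>b\<in>UNIV. \<Sum>d\<in>UNIV. (u::real^'n)$b * v$d * F b d) + (\<Sum>b\<in>UNIV. \<Sum>d\<in>UNIV. u$b * v$d * G b d)
   = (\<Sum>b\<in>UNIV. \<Sum>d\<in>UNIV. u$b * v$d * (F b d + G b d))"
  by (simp add: sum.distrib[symmetric] algebra_simps)

lemma dsum_swap: "(\<Sum>b\<in>UNIV. \<Sum>d\<in>UNIV. (u::real^'n)$b * v$d * F b d) = (\<Sum>b\<in>UNIV. \<Sum>d\<in>UNIV. v$b * u$d * F d b)"
  by (subst sum.swap) (simp add: algebra_simps)

lemma dsum_cong: "(\<And>b d. F b d = G b d) \<Longrightarrow> (\<Sum>b\<in>UNIV. \<Sum>d\<in>UNIV. (u::real^'n)$b * v$d * F b d) = (\<Sum>b\<in>UNIV. \<Sum>d\<in>UNIV. u$b * v$d * G b d)"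
  by simp

lemma dsum_zero: "(\<And>b d. F b d = 0) \<Longrightarrow> (\<Sum>b\<in>UNIV. \<Sum>d\<in>UNIV. (u::real^'n)$b * v$d * F b d) = 0"
  by simp

lemma dsum_axis: "(\<Sum>b\<in>UNIV. \<Sum>d\<in>UNIV. (axis b0 1 :: real^'n)$b * (axis d0 1 :: real^'n)$d * F b d) = F b0 d0"
proof -
  have "(\<Sum>d\<in>UNIV. (axis b0 1 :: real^'n)$b * (axis d0 1 :: real^'n)$d * F b d) = (if b = b0 then F b d0 else 0)" for b
    by (simp add: axis_def if_distrib[of "\<lambda>t. t * _"] cong: if_cong)
  then show ?thesis by simp
qed



definition Jm :: "'n::finite tens2 \<Rightarrow> real^'n \<Rightarrow> real^'n^'n" where "Jm J x = (\<chi> i j. J x i j)"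
definition Gm :: "'n::finite tens2 \<Rightarrow> real^'n \<Rightarrow> real^'n^'n" where "Gm g x = (\<chi> i j. g x i j)"
definition Pm :: "'n::finite tens2 \<Rightarrow> real^'n \<Rightarrow> real^'n \<Rightarrow> real^'n^'n" where "Pm J x y = (\<chi> b e. \<Sum>a\<in>UNIV. y$a * pd (\<lambda>z. J z b e) a x)"
definition Qm :: "'n::finite tens2 \<Rightarrow> real^'n \<Rightarrow> real^'n \<Rightarrow> real^'n^'n" where "Qm g x y = (\<chi> b e. \<Sum>a\<in>UNIV. y$a * pd (\<lambda>z. g z b e) a x)"
definition Gam :: "'n::finite tens2 \<Rightarrow> 'n tens2 \<Rightarrow> real^'n \<Rightarrow> real^'n \<Rightarrow> real^'n^'n" where "Gam g J x y = (\<chi> b d. \<Sum>a\<in>UNIV. y$a * GamC g J x b a d)"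
definition bet :: "'n::finite tens2 \<Rightarrow> 'n tens2 \<Rightarrow> real^'n \<Rightarrow> real^'n \<Rightarrow> real" where "bet g J x y = (\<Sum>a\<in>UNIV. y$a * Blow g J x a)"
definition Am :: "'n::finite tens2 \<Rightarrow> 'n tens2 \<Rightarrow> real^'n \<Rightarrow> real^'n \<Rightarrow> real^'n^'n" where "Am g J x y = (\<chi> b e. \<Sum>a\<in>UNIV. y$a * nablacJ g J x a b e)"

lemma L1: "Am g J x y *v u = Pm J x y *v u + Gam g J x y *v (Jm J x *v u) - Jm J x *v (Gam g J x y *v u)"
proof -
  have "(Am g J x y *v u)$b = (Pm J x y *v u + Gam g J x y *v (Jm J x *v u) - Jm J x *v (Gam g J x y *v u))$b" for b
  proof -
    have 1: "(Am g J x y *v u)$b = (\<Sum>e\<in>UNIV. \<Sum>a\<in>UNIV. y$a * pd (\<lambda>y. J y b e) a x * u$e)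
        + (\<Sum>e\<in>UNIV. \<Sum>a\<in>UNIV. \<Sum>d\<in>UNIV. y$a * GamC g J x b a d * J x d e * u$e)
        - (\<Sum>e\<in>UNIV. \<Sum>a\<in>UNIV. \<Sum>d\<in>UNIV. y$a * GamC g J x d a e * J x b d * u$e)"
      by (simp add: Am_def matrix_vector_mult_def nablacJ_def sum_distrib_left sum_distrib_right
          sum.distrib sum_subtractf algebra_simps)
    have 2: "(Pm J x y *v u)$b = (\<Sum>e\<in>UNIV. \<Sum>a\<in>UNIV. y$a * pd (\<lambda>y. J y b e) a x * u$e)"
      by (simp add: Pm_def matrix_vector_mult_def sum_distrib_right)
    have 3: "(Gam g J x y *v (Jm J x *v u))$b = (\<Sum>e\<in>UNIV. \<Sum>a\<in>UNIV. \<Sum>d\<in>UNIV. y$a * GamC g J x b a d * J x d e * u$e)"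
    proof -
      have "(Gam g J x y *v (Jm J x *v u))$b = (\<Sum>d\<in>UNIV. \<Sum>a\<in>UNIV. \<Sum>e\<in>UNIV. y$a * GamC g J x b a d * J x d e * u$e)"
        by (simp add: Gam_def Jm_def matrix_vector_mult_def sum_distrib_right sum_distrib_left algebra_simps)
      also have "\<dots> = (\<Sum>a\<in>UNIV. \<Sum>d\<in>UNIV. \<Sum>e\<in>UNIV. y$a * GamC g J x b a d * J x d e * u$e)" by (rule sum.swap)
      also have "\<dots> = (\<Sum>a\<in>UNIV. \<Sum>e\<in>UNIV. \<Sum>d\<in>UNIV. y$a * GamC g J x b a d * J x d e * u$e)" by (rule sum.cong[OF refl], rule sum.swap)
      also have "\<dots> = (\<Sum>e\<in>UNIV. \<Sum>a\<in>UNIV. \<Sum>d\<in>UNIV. y$a * GamC g J x b a d * J x d e * u$e)" by (rule sum.swap)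
      finally show ?thesis .
    qed
    have 4: "(Jm J x *v (Gam g J x y *v u))$b = (\<Sum>e\<in>UNIV. \<Sum>a\<in>UNIV. \<Sum>d\<in>UNIV. y$a * GamC g J x d a e * J x b d * u$e)"
    proof -
      have "(Jm J x *v (Gam g J x y *v u))$b = (\<Sum>d\<in>UNIV. \<Sum>e\<in>UNIV. \<Sum>a\<in>UNIV. y$a * GamC g J x d a e * J x b d * u$e)"
        by (simp add: Gam_def Jm_def matrix_vector_mult_def sum_distrib_right sum_distrib_left algebra_simps)
      also have "\<dots> = (\<Sum>e\<in>UNIV. \<Sum>d\<in>UNIV. \<Sum>a\<in>UNIV. y$a * GamC g J x d a e * J x b d * u$e)" by (rule sum.swap)
      also have "\<dots> = (\<Sum>e\<in>UNIV. \<Sum>a\<in>UNIV. \<Sum>d\<in>UNIV. y$a * GamC g J x d a e * J x b d * u$e)" by (rule sum.cong[OF refl], rule sum.swap)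
      finally show ?thesis .
    qed
    show ?thesis using 1 2 3 4 by simp
  qed
  then show ?thesis by (simp add: vec_eq_iff)
qed

lemma LC_sym: assumes gs: "\<And>i j. g x i j = g x j i" and dg: "\<And>i j l. pd (\<lambda>y. g y i j) l x = pd (\<lambda>y. g y j i) l x"
  shows "LC g x k i j = LC g x k j i"
  unfolding LC_def
  by (rule arg_cong[where f="\<lambda>t. 1/2*t"], rule sum.cong[OF refl]) (simp add: dg[of i j] algebra_simps)

lemma GamC_sym: assumes gs: "\<And>i j. g x i j = g x j i" and dg: "\<And>i j l. pd (\<lambda>y. g y i j) l x = pd (\<lambda>y. g y j i) l x"
  shows "GamC g J x b a d = GamC g J x b d a"
  unfolding GamC_def using LC_sym[where g=g and x=x, OF gs dg] gs by (simp add: kdelta_def algebra_simps)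

lemma L2: assumes gs: "\<And>i j. g x i j = g x j i" and dg: "\<And>i j l. pd (\<lambda>y. g y i j) l x = pd (\<lambda>y. g y j i) l x"
  shows "Gam g J x y *v u = Gam g J x u *v y"
proof -
  have "(Gam g J x y *v u)$b = (Gam g J x u *v y)$b" for b
  proof -
    have "(Gam g J x y *v u)$b = (\<Sum>d\<in>UNIV. \<Sum>a\<in>UNIV. y$a * GamC g J x b a d * u$d)"
      by (simp add: Gam_def matrix_vector_mult_def sum_distrib_right)
    also have "\<dots> = (\<Sum>a\<in>UNIV. \<Sum>d\<in>UNIV. y$a * GamC g J x b a d * u$d)" by (rule sum.swap)
    also have "\<dots> = (\<Sum>a\<in>UNIV. \<Sum>d\<in>UNIV. u$d * GamC g J x b d a * y$a)"
      using GamC_sym[where g=g and x=x, OF gs dg] by (simp add: algebra_simps)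
    also have "\<dots> = (Gam g J x u *v y)$b"
      by (simp add: Gam_def matrix_vector_mult_def sum_distrib_right)
    finally show ?thesis .
  qed
  then show ?thesis by (simp add: vec_eq_iff)
qed

lemma L3a: "Jv J x u = Jm J x *v u"
  by (simp add: Jv_def Jm_def matrix_vector_mult_def)

lemma L3b: "Gc g J x v w = -(1/2) *\<^sub>R (Jm J x *v (Am g J x w *v v))"
proof -
  have "(Gc g J x v w)$k = (-(1/2) *\<^sub>R (Jm J x *v (Am g J x w *v v)))$k" for k
    by (simp add: Gc_def Jm_def Am_def matrix_vector_mult_def sum_distrib_left sum_distrib_right algebra_simps sum_negf sum_divide_distrib)
  then show ?thesis by (simp add: vec_eq_iff)
qed



lemma sum_kdelta1[simp]: "(\<Sum>c\<in>(UNIV::'a::finite set). kdelta c b * f c) = f b"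
proof -
  have "kdelta c b * f c = (if c = b then f c else 0)" for c :: 'a by (simp add: kdelta_def)
  then show ?thesis by simp
qed
lemma sum_kdelta2[simp]: "(\<Sum>c\<in>(UNIV::'a::finite set). f c * kdelta c b) = f b"
  using sum_kdelta1[of b f] by (simp add: mult.commute)
lemma kdelta_sym: "kdelta a b = kdelta b a" by (simp add: kdelta_def)
lemma sum_kdelta3[simp]: "(\<Sum>c\<in>(UNIV::'a::finite set). kdelta b c * f c) = f b"
  using sum_kdelta1[of b f] by (simp add: kdelta_sym)
lemma sum_kdelta4[simp]: "(\<Sum>c\<in>(UNIV::'a::finite set). f c * kdelta b c) = f b"
  using sum_kdelta2[of f b] by (simp add: kdelta_sym)

lemma mat1_mv: "(- mat 1 :: real^'n::finite^'n) *v u = - u"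
proof -
  have "(- mat 1 :: real^'n::finite^'n) *v u = - (mat 1 *v u)" by (simp add: vec_eq_iff matrix_vector_mult_def sum_negf)
  then show ?thesis by simp
qed

lemma V_J2: assumes J2c: "\<And>a c. (\<Sum>b\<in>UNIV. J x a b * J x b c) = - kdelta a c"
  shows "Jm J x *v (Jm J x *v u) = - u"
proof -
  have "(Jm J x ** Jm J x) = - mat 1"
    using J2c by (simp add: vec_eq_iff Jm_def matrix_matrix_mult_def mat_def kdelta_def)
  then show ?thesis by (simp add: mv_assoc mat1_mv)
qed

lemma V_Gsym: assumes gs: "\<And>i j. g x i j = g x j i"
  shows "u \<bullet> (Gm g x *v v) = v \<bullet> (Gm g x *v u)"
  unfolding E1 by (subst dsum_swap) (simp add: Gm_def gs)

lemma V_H: assumes Hc: "\<And>a b. (\<Sum>c\<in>UNIV. \<Sum>d\<in>UNIV. g x c d * J x c a * J x d b) = g x a b"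
  shows "(Jm J x *v u) \<bullet> (Gm g x *v (Jm J x *v v)) = u \<bullet> (Gm g x *v v)"
  apply (subst E3, subst E1)
proof (rule dsum_cong)
  fix b d
  show "(\<Sum>c\<in>UNIV. \<Sum>e\<in>UNIV. Jm J x $ c $ b * Gm g x $ c $ e * Jm J x $ e $ d) = Gm g x $ b $ d"
    using Hc[of b d] by (simp add: Jm_def Gm_def algebra_simps)
qed

lemma V_Jskew: assumes J2c: "\<And>a c. (\<Sum>b\<in>UNIV. J x a b * J x b c) = - kdelta a c"
  and Hc: "\<And>a b. (\<Sum>c\<in>UNIV. \<Sum>d\<in>UNIV. g x c d * J x c a * J x d b) = g x a b"
  shows "(Jm J x *v u) \<bullet> (Gm g x *v v) = - (u \<bullet> (Gm g x *v (Jm J x *v v)))"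
  using V_H[where g=g and J=J and x=x, OF Hc, of "Jm J x *v u" v] V_J2[where J=J and x=x, OF J2c]
  by simp



lemma V_P: assumes F3: "\<And>k e a. (\<Sum>b\<in>UNIV. J x k b * pd (\<lambda>z. J z b e) a x + pd (\<lambda>z. J z k b) a x * J x b e) = 0"
  shows "Jm J x *v (Pm J x y *v u) = - (Pm J x y *v (Jm J x *v u))"
proof -
  have "(Jm J x *v (Pm J x y *v u) + Pm J x y *v (Jm J x *v u))$k = 0" for k
  proof -
    have "(Jm J x *v (Pm J x y *v u) + Pm J x y *v (Jm J x *v u))$k
      = (\<Sum>b\<in>UNIV. \<Sum>e\<in>UNIV. \<Sum>a\<in>UNIV. u$e * y$a * (J x k b * pd (\<lambda>z. J z b e) a x))
      + (\<Sum>b\<in>UNIV. \<Sum>e\<in>UNIV. \<Sum>a\<in>UNIV. u$e * y$a * (pd (\<lambda>z. J z k b) a x * J x b e))"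
      apply (simp add: Jm_def Pm_def matrix_vector_mult_def sum_distrib_left sum_distrib_right algebra_simps)
      apply (rule sum.cong[OF refl], rule sum.swap)
      done
    also have "\<dots> = (\<Sum>b\<in>UNIV. \<Sum>e\<in>UNIV. \<Sum>a\<in>UNIV. u$e * y$a * (J x k b * pd (\<lambda>z. J z b e) a x + pd (\<lambda>z. J z k b) a x * J x b e))"
      by (simp add: sum.distrib[symmetric] algebra_simps)
    also have "\<dots> = (\<Sum>e\<in>UNIV. \<Sum>b\<in>UNIV. \<Sum>a\<in>UNIV. u$e * y$a * (J x k b * pd (\<lambda>z. J z b e) a x + pd (\<lambda>z. J z k b) a x * J x b e))"
      by (rule sum.swap)
    also have "\<dots> = (\<Sum>e\<in>UNIV. \<Sum>a\<in>UNIV. \<Sum>b\<in>UNIV. u$e * y$a * (J x k b * pd (\<lambda>z. J z b e) a x + pd (\<lambda>z. J z k b) a x * J x b e))"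
      by (rule sum.cong[OF refl], rule sum.swap)
    also have "\<dots> = (\<Sum>e\<in>UNIV. \<Sum>a\<in>UNIV. u$e * y$a * (\<Sum>b\<in>UNIV. J x k b * pd (\<lambda>z. J z b e) a x + pd (\<lambda>z. J z k b) a x * J x b e))"
      by (simp add: sum_distrib_left)
    also have "\<dots> = 0" using F3 by simp
    finally show ?thesis .
  qed
  then show ?thesis by (simp add: vec_eq_iff eq_neg_iff_add_eq_0)
qed

lemma Ai: assumes J2c: "\<And>a c. (\<Sum>b\<in>UNIV. J x a b * J x b c) = - kdelta a c"
  and F3: "\<And>k e a. (\<Sum>b\<in>UNIV. J x k b * pd (\<lambda>z. J z b e) a x + pd (\<lambda>z. J z k b) a x * J x b e) = 0"
  shows "Jm J x *v (Am g J x y *v u) = - (Am g J x y *v (Jm J x *v u))"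
  unfolding L1 mv_add mv_diff mv_neg V_J2[where J=J and x=x, OF J2c] V_P[where J=J and x=x, OF F3]
  by (simp add: algebra_simps)

lemma Aiii: assumes J2c: "\<And>a c. (\<Sum>b\<in>UNIV. J x a b * J x b c) = - kdelta a c"
  and gs: "\<And>i j. g x i j = g x j i" and dg: "\<And>i j l. pd (\<lambda>y. g y i j) l x = pd (\<lambda>y. g y j i) l x"
  and Nc: "\<And>v w. Pm J x (Jm J x *v v) *v w - Pm J x (Jm J x *v w) *v v + Jm J x *v (Pm J x w *v v) - Jm J x *v (Pm J x v *v w) = 0"
  shows "Am g J x (Jm J x *v v) *v w - Am g J x (Jm J x *v w) *v v + Jm J x *v (Am g J x w *v v) - Jm J x *v (Am g J x v *v w) = 0"
proof -
  note G = L2[where g=g and x=x and J=J, OF gs dg]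
  have 1: "Gam g J x (Jm J x *v v) *v (Jm J x *v w) = Gam g J x (Jm J x *v w) *v (Jm J x *v v)" by (rule G)
  have 2: "Gam g J x (Jm J x *v v) *v w = Gam g J x w *v (Jm J x *v v)" by (rule G)
  have 3: "Gam g J x (Jm J x *v w) *v v = Gam g J x v *v (Jm J x *v w)" by (rule G)
  have 4: "Gam g J x w *v v = Gam g J x v *v w" by (rule G)
  show ?thesis
    unfolding L1 mv_add mv_diff mv_neg V_J2[where J=J and x=x, OF J2c] 1 2 3 4
    using Nc[of v w] by (simp add: algebra_simps)
qed

lemma Aii_abs:
  fixes P Ga Jm Gm Q :: "real^'n::finite^'n" and \<beta> :: real
  assumes Gsym: "\<And>u v. u \<bullet> (Gm *v v) = v \<bullet> (Gm *v u)"
    and Jskew: "\<And>u v. (Jm *v u) \<bullet> (Gm *v v) = - (u \<bullet> (Gm *v (Jm *v v)))"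
    and F2v: "\<And>u v. (Ga *v u) \<bullet> (Gm *v v) + u \<bullet> (Gm *v (Ga *v v)) = u \<bullet> (Q *v v) - 2 * \<beta> * (u \<bullet> (Gm *v v))"
    and F4v: "\<And>u v. (P *v u) \<bullet> (Gm *v v) + (Jm *v u) \<bullet> (Q *v v) + (P *v v) \<bullet> (Gm *v u) + (Jm *v v) \<bullet> (Q *v u) = 0"
    and Qsym: "\<And>u v. u \<bullet> (Q *v v) = v \<bullet> (Q *v u)"
  shows "(P *v u + Ga *v (Jm *v u) - Jm *v (Ga *v u)) \<bullet> (Gm *v v)
       + u \<bullet> (Gm *v (P *v v + Ga *v (Jm *v v) - Jm *v (Ga *v v))) = 0"
proof -
  have a: "(Jm *v (Ga *v u)) \<bullet> (Gm *v v) = - ((Ga *v u) \<bullet> (Gm *v (Jm *v v)))" by (rule Jskew)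
  have b: "(Jm *v u) \<bullet> (Gm *v (Ga *v v)) = - (u \<bullet> (Gm *v (Jm *v (Ga *v v))))" by (rule Jskew)
  have c: "u \<bullet> (Gm *v (P *v v)) = (P *v v) \<bullet> (Gm *v u)" by (rule Gsym)
  have d: "u \<bullet> (Q *v (Jm *v v)) = (Jm *v v) \<bullet> (Q *v u)" by (rule Qsym)
  have e: "(Jm *v u) \<bullet> (Gm *v v) = - (u \<bullet> (Gm *v (Jm *v v)))" by (rule Jskew)
  note f1 = F2v[of "Jm *v u" v] and f2 = F2v[of u "Jm *v v"] and f4 = F4v[of u v]
  show ?thesis
    unfolding mv_add mv_diff inner_add_left inner_diff_left inner_add_right inner_diff_right
    using a b c d e f1 f2 f4 by (simp add: algebra_simps)
qed



lemma swap_lin: "(\<Sum>c\<in>UNIV. \<Sum>a\<in>UNIV. (y::real^'n::finite)$a * F a c) = (\<Sum>a\<in>UNIV. y$a * (\<Sum>c\<in>(UNIV::'m::finite set). F a c))"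
  by (subst sum.swap) (simp add: sum_distrib_left)

lemma Qsym_v: assumes dg: "\<And>i j l. pd (\<lambda>y. g y i j) l x = pd (\<lambda>y. g y j i) l x"
  shows "u \<bullet> (Qm g x y *v v) = v \<bullet> (Qm g x y *v u)"
  unfolding E1
  apply (subst dsum_swap)
  apply (rule dsum_cong)
  apply (simp add: Qm_def dg)
  done

lemma F4v: assumes F4c: "\<And>a b d. (\<Sum>c\<in>UNIV. pd (\<lambda>z. J z c b) a x * g x c d + J x c b * pd (\<lambda>z. g z c d) a x
      + pd (\<lambda>z. J z c d) a x * g x c b + J x c d * pd (\<lambda>z. g z c b) a x) = 0"
  shows "(Pm J x y *v u) \<bullet> (Gm g x *v v) + (Jm J x *v u) \<bullet> (Qm g x y *v v)
       + (Pm J x y *v v) \<bullet> (Gm g x *v u) + (Jm J x *v v) \<bullet> (Qm g x y *v u) = 0"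
proof -
  have t3: "(Pm J x y *v v) \<bullet> (Gm g x *v u) = (\<Sum>b\<in>UNIV. \<Sum>d\<in>UNIV. u$b * v$d * (\<Sum>c\<in>UNIV. Pm J x y$c$d * Gm g x$c$b))"
    by (subst E2, subst dsum_swap, rule refl)
  have t4: "(Jm J x *v v) \<bullet> (Qm g x y *v u) = (\<Sum>b\<in>UNIV. \<Sum>d\<in>UNIV. u$b * v$d * (\<Sum>c\<in>UNIV. Jm J x$c$d * Qm g x y$c$b))"
    by (subst E2, subst dsum_swap, rule refl)
  have comp: "(\<Sum>c\<in>UNIV. Pm J x y$c$b * Gm g x$c$d) + (\<Sum>c\<in>UNIV. Jm J x$c$b * Qm g x y$c$d)
     + (\<Sum>c\<in>UNIV. Pm J x y$c$d * Gm g x$c$b) + (\<Sum>c\<in>UNIV. Jm J x$c$d * Qm g x y$c$b) = 0" for b d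
  proof -
    have "(\<Sum>c\<in>UNIV. Pm J x y$c$b * Gm g x$c$d) + (\<Sum>c\<in>UNIV. Jm J x$c$b * Qm g x y$c$d)
     + (\<Sum>c\<in>UNIV. Pm J x y$c$d * Gm g x$c$b) + (\<Sum>c\<in>UNIV. Jm J x$c$d * Qm g x y$c$b)
     = (\<Sum>c\<in>UNIV. \<Sum>a\<in>UNIV. y$a * (pd (\<lambda>z. J z c b) a x * g x c d + J x c b * pd (\<lambda>z. g z c d) a x
      + pd (\<lambda>z. J z c d) a x * g x c b + J x c d * pd (\<lambda>z. g z c b) a x))"
      by (simp add: Pm_def Gm_def Jm_def Qm_def sum_distrib_left sum_distrib_right sum.distrib[symmetric] algebra_simps)
    also have "\<dots> = 0" unfolding swap_lin using F4c by simp
    finally show ?thesis .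
  qed
  show ?thesis
    unfolding E2[of "Pm J x y" u] E2[of "Jm J x" u] t3 t4 dsum_add
    by (rule dsum_zero) (use comp in \<open>simp add: algebra_simps\<close>)
qed

lemma F2v: assumes F2c: "\<And>a b d. (\<Sum>c\<in>UNIV. GamC g J x c a b * g x c d) + (\<Sum>c\<in>UNIV. g x b c * GamC g J x c a d)
      = pd (\<lambda>z. g z b d) a x - 2 * Blow g J x a * g x b d"
  shows "(Gam g J x y *v u) \<bullet> (Gm g x *v v) + u \<bullet> (Gm g x *v (Gam g J x y *v v))
     = u \<bullet> (Qm g x y *v v) - 2 * bet g J x y * (u \<bullet> (Gm g x *v v))"
proof -
  have comp: "(\<Sum>c\<in>UNIV. Gam g J x y$c$b * Gm g x$c$d) + (\<Sum>c\<in>UNIV. Gm g x$b$c * Gam g J x y$c$d)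
      = Qm g x y$b$d - 2 * bet g J x y * Gm g x$b$d" for b d
  proof -
    have "(\<Sum>c\<in>UNIV. Gam g J x y$c$b * Gm g x$c$d) + (\<Sum>c\<in>UNIV. Gm g x$b$c * Gam g J x y$c$d)
       = (\<Sum>c\<in>UNIV. \<Sum>a\<in>UNIV. y$a * (GamC g J x c a b * g x c d + g x b c * GamC g J x c a d))"
      by (simp add: Gam_def Gm_def sum_distrib_left sum_distrib_right sum.distrib[symmetric] algebra_simps)
    also have "\<dots> = (\<Sum>a\<in>UNIV. y$a * (pd (\<lambda>z. g z b d) a x - 2 * Blow g J x a * g x b d))"
      unfolding swap_lin using F2c by (simp add: sum.distrib)
    also have "\<dots> = Qm g x y$b$d - 2 * bet g J x y * Gm g x$b$d"
      by (simp add: Qm_def bet_def Gm_def sum_distrib_left sum_distrib_right sum_subtractf algebra_simps)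
    finally show ?thesis .
  qed
  have s: "2 * bet g J x y * (\<Sum>b\<in>UNIV. \<Sum>d\<in>UNIV. u$b * v$d * Gm g x$b$d)
     = (\<Sum>b\<in>UNIV. \<Sum>d\<in>UNIV. u$b * v$d * (2 * bet g J x y * Gm g x$b$d))"
    by (simp add: sum_distrib_left algebra_simps)
  have s2: "(\<Sum>b\<in>UNIV. \<Sum>d\<in>UNIV. u$b * v$d * Qm g x y$b$d) - (\<Sum>b\<in>UNIV. \<Sum>d\<in>UNIV. u$b * v$d * (2 * bet g J x y * Gm g x$b$d))
     = (\<Sum>b\<in>UNIV. \<Sum>d\<in>UNIV. u$b * v$d * (Qm g x y$b$d - 2 * bet g J x y * Gm g x$b$d))"
    by (simp add: sum_subtractf[symmetric] algebra_simps)
  show ?thesis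
    apply (subst E2, subst E4)
    unfolding E1 s s2 dsum_add comp by simp
qed



lemma swap2: "(\<Sum>c\<in>UNIV. (\<Sum>l\<in>UNIV. A c l) * (h c::real)) = (\<Sum>l\<in>(UNIV::'b::finite set). \<Sum>c\<in>(UNIV::'a::finite set). A c l * h c)"
  by (subst sum.swap) (simp add: sum_distrib_right)
lemma swap2': "(\<Sum>c\<in>UNIV. (h c::real) * (\<Sum>l\<in>UNIV. A c l)) = (\<Sum>l\<in>(UNIV::'b::finite set). \<Sum>c\<in>(UNIV::'a::finite set). h c * A c l)"
  by (subst sum.swap) (simp add: sum_distrib_left)

lemma F2c:
  fixes g J :: "'n::finite tens2"
  assumes gs: "\<And>i j. g x i j = g x j i" and dg: "\<And>i j l. pd (\<lambda>y. g y i j) l x = pd (\<lambda>y. g y j i) l x"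
    and GI: "\<And>b l. (\<Sum>c\<in>UNIV. g x b c * ginv g x c l) = kdelta b l"
  shows "(\<Sum>c\<in>UNIV. GamC g J x c a b * g x c d) + (\<Sum>c\<in>UNIV. g x b c * GamC g J x c a d)
      = pd (\<lambda>z. g z b d) a x - 2 * Blow g J x a * g x b d"
proof -
  have GI2: "(\<Sum>c\<in>UNIV. ginv g x c l * g x c d) = kdelta l d" for l d
    using GI[of d l] by (simp add: gs mult.commute kdelta_sym)
  define X where "X i j l = pd (\<lambda>y. g y j l) i x + pd (\<lambda>y. g y i l) j x - pd (\<lambda>y. g y i j) l x" for i j l
  have LCX: "LC g x k i j = (1/2) * (\<Sum>l\<in>UNIV. ginv g x k l * X i j l)" for k i j
    unfolding LC_def X_def by simp
  have b: "(\<Sum>c\<in>UNIV. LC g x c a b * g x c d) = (1/2) * X a b d"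
  proof -
    have "(\<Sum>c\<in>UNIV. LC g x c a b * g x c d) = (1/2) * (\<Sum>c\<in>UNIV. (\<Sum>l\<in>UNIV. ginv g x c l * X a b l) * g x c d)"
      unfolding LCX by (simp add: sum_distrib_left algebra_simps)
    also have "\<dots> = (1/2) * (\<Sum>l\<in>UNIV. (\<Sum>c\<in>UNIV. ginv g x c l * g x c d) * X a b l)"
      by (subst swap2) (simp add: sum_distrib_right sum_distrib_left algebra_simps)
    also have "\<dots> = (1/2) * X a b d" unfolding GI2 by simp
    finally show ?thesis .
  qed
  have c: "(\<Sum>c\<in>UNIV. g x b c * LC g x c a d) = (1/2) * X a d b"
  proof -
    have "(\<Sum>c\<in>UNIV. g x b c * LC g x c a d) = (1/2) * (\<Sum>c\<in>UNIV. g x b c * (\<Sum>l\<in>UNIV. ginv g x c l * X a d l))"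
      unfolding LCX by (simp add: sum_distrib_left algebra_simps)
    also have "\<dots> = (1/2) * (\<Sum>l\<in>UNIV. (\<Sum>c\<in>UNIV. g x b c * ginv g x c l) * X a d l)"
      by (subst swap2') (simp add: sum_distrib_right sum_distrib_left algebra_simps)
    also have "\<dots> = (1/2) * X a d b" unfolding GI by simp
    finally show ?thesis .
  qed
  have dB: "(\<Sum>c\<in>UNIV. Bup g J x c * g x c d) = Blow g J x d"
  proof -
    have "(\<Sum>c\<in>UNIV. Bup g J x c * g x c d) = (\<Sum>e\<in>UNIV. (\<Sum>c\<in>UNIV. ginv g x c e * g x c d) * Blow g J x e)"
      unfolding Bup_def by (subst swap2) (simp add: sum_distrib_right sum_distrib_left algebra_simps)
    then show ?thesis unfolding GI2 by simp
  qed
  have eB: "(\<Sum>c\<in>UNIV. g x b c * Bup g J x c) = Blow g J x b"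
  proof -
    have "(\<Sum>c\<in>UNIV. g x b c * Bup g J x c) = (\<Sum>e\<in>UNIV. (\<Sum>c\<in>UNIV. g x b c * ginv g x c e) * Blow g J x e)"
      unfolding Bup_def by (subst swap2') (simp add: sum_distrib_right sum_distrib_left algebra_simps)
    then show ?thesis unfolding GI by simp
  qed
  have s1: "(\<Sum>c\<in>UNIV. GamC g J x c a b * g x c d) = (1/2) * X a b d - Blow g J x a * g x b d
       + Blow g J x d * g x a b - Blow g J x b * g x a d"
  proof -
    have "(\<Sum>c\<in>UNIV. GamC g J x c a b * g x c d) = (\<Sum>c\<in>UNIV. LC g x c a b * g x c d)
       - Blow g J x a * (\<Sum>c\<in>UNIV. kdelta c b * g x c d) + (\<Sum>c\<in>UNIV. Bup g J x c * g x c d) * g x a b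
       - Blow g J x b * (\<Sum>c\<in>UNIV. kdelta c a * g x c d)"
      unfolding GamC_def by (simp add: sum.distrib sum_subtractf sum_distrib_left sum_distrib_right algebra_simps)
    then show ?thesis unfolding b dB by simp
  qed
  have s2: "(\<Sum>c\<in>UNIV. g x b c * GamC g J x c a d) = (1/2) * X a d b - Blow g J x a * g x b d
       + Blow g J x b * g x a d - Blow g J x d * g x b a"
  proof -
    have "(\<Sum>c\<in>UNIV. g x b c * GamC g J x c a d) = (\<Sum>c\<in>UNIV. g x b c * LC g x c a d)
       - Blow g J x a * (\<Sum>c\<in>UNIV. g x b c * kdelta c d) + (\<Sum>c\<in>UNIV. g x b c * Bup g J x c) * g x a d
       - Blow g J x d * (\<Sum>c\<in>UNIV. g x b c * kdelta c a)"
      unfolding GamC_def by (simp add: sum.distrib sum_subtractf sum_distrib_left sum_distrib_right algebra_simps)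
    then show ?thesis unfolding c eB by simp
  qed
  show ?thesis unfolding s1 s2 X_def using gs[of a b] dg[of d b a] by (simp add: algebra_simps)
qed



lemma pd_add: assumes "f differentiable at x" "h differentiable at x"
  shows "pd (\<lambda>y. f y + h y) i x = pd f i x + pd h i x"
proof -
  have "((\<lambda>y. f y + h y) has_derivative (\<lambda>v. frechet_derivative f (at x) v + frechet_derivative h (at x) v)) (at x)"
    using has_derivative_add[OF pd_works[OF assms(1)] pd_works[OF assms(2)]] by simp
  from frechet_derivative_at[OF this] show ?thesis unfolding pd_def by metis
qed

lemma CAH_parts:
  assumes "conf_almost_hermitian U g J"
  shows "open U" and "\<And>x i j. x \<in> U \<Longrightarrow> (\<lambda>y. g y i j) differentiable at x"
    and "\<And>x i j. x \<in> U \<Longrightarrow> (\<lambda>y. J y i j) differentiable at x"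
    and "\<And>x i j. x \<in> U \<Longrightarrow> g x i j = g x j i"
    and "\<And>x v. x \<in> U \<Longrightarrow> v \<noteq> 0 \<Longrightarrow> (\<Sum>i\<in>UNIV. \<Sum>j\<in>UNIV. g x i j * v $ i * v $ j) > 0"
    and "\<And>x a c. x \<in> U \<Longrightarrow> (\<Sum>b\<in>UNIV. J x a b * J x b c) = - kdelta a c"
    and "\<And>x a b. x \<in> U \<Longrightarrow> (\<Sum>c\<in>UNIV. \<Sum>d\<in>UNIV. g x c d * J x c a * J x d b) = g x a b"
  using assms unfolding conf_almost_hermitian_def smooth_tens_def
  apply -
  apply blast
  apply (meson smooth_diff)
  apply (meson smooth_diff)
  by auto

context
  fixes U and g J :: "'n::finite tens2"
  assumes CAH: "conf_almost_hermitian U g J"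
begin

lemma opn: "open U" using CAH_parts[OF CAH] by blast
lemma dgx: "x \<in> U \<Longrightarrow> (\<lambda>y. g y i j) differentiable at x" using CAH_parts[OF CAH] by blast
lemma dJx: "x \<in> U \<Longrightarrow> (\<lambda>y. J y i j) differentiable at x" using CAH_parts[OF CAH] by blast
lemma gsx: "x \<in> U \<Longrightarrow> g x i j = g x j i" using CAH_parts[OF CAH] by blast
lemma posx: "x \<in> U \<Longrightarrow> v \<noteq> 0 \<Longrightarrow> (\<Sum>i\<in>UNIV. \<Sum>j\<in>UNIV. g x i j * v $ i * v $ j) > 0" using CAH_parts[OF CAH] by blast
lemma J2x: "x \<in> U \<Longrightarrow> (\<Sum>b\<in>UNIV. J x a b * J x b c) = - kdelta a c" using CAH_parts[OF CAH] by blast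
lemma Hx: "x \<in> U \<Longrightarrow> (\<Sum>c\<in>UNIV. \<Sum>d\<in>UNIV. g x c d * J x c a * J x d b) = g x a b" using CAH_parts[OF CAH] by blast

lemma dg_sym: "x \<in> U \<Longrightarrow> pd (\<lambda>y. g y i j) l x = pd (\<lambda>y. g y j i) l x"
  by (rule pd_eq_open[OF dgx opn]) (auto intro: gsx)

lemma F3x: assumes x: "x \<in> U"
  shows "(\<Sum>b\<in>UNIV. J x k b * pd (\<lambda>z. J z b e) a x + pd (\<lambda>z. J z k b) a x * J x b e) = 0"
proof -
  have "pd (\<lambda>z. \<Sum>b\<in>UNIV. J z k b * J z b e) a x = 0"
    by (rule pd_const_open[OF opn x]) (rule J2x)
  moreover have "pd (\<lambda>z. \<Sum>b\<in>UNIV. J z k b * J z b e) a x = (\<Sum>b\<in>UNIV. J x k b * pd (\<lambda>z. J z b e) a x + pd (\<lambda>z. J z k b) a x * J x b e)"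
    by (rule pd_sum_mult_diff) (use dJx x in auto)
  ultimately show ?thesis by simp
qed

lemma Gpos_v: "x \<in> U \<Longrightarrow> u \<noteq> 0 \<Longrightarrow> u \<bullet> (Gm g x *v u) > 0"
  unfolding E1 using posx[of x u] by (simp add: Gm_def algebra_simps)

lemma omega_anti: assumes x: "x \<in> U"
  shows "(\<Sum>c\<in>UNIV. g x c d * J x c b) + (\<Sum>c\<in>UNIV. g x c b * J x c d) = 0"
proof -
  have "(Jm J x *v axis b 1) \<bullet> (Gm g x *v axis d 1) = - (axis b 1 \<bullet> (Gm g x *v (Jm J x *v axis d 1)))"
    by (rule V_Jskew) (use J2x Hx x in auto)
  moreover have "(Jm J x *v axis b 1) \<bullet> (Gm g x *v axis d 1) = (\<Sum>c\<in>UNIV. g x c d * J x c b)"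
    unfolding E2 dsum_axis by (simp add: Jm_def Gm_def mult.commute)
  moreover have "axis b 1 \<bullet> (Gm g x *v (Jm J x *v axis d 1)) = (\<Sum>c\<in>UNIV. g x c b * J x c d)"
    unfolding E4 dsum_axis using gsx[OF x] by (simp add: Jm_def Gm_def)
  ultimately show ?thesis by simp
qed

lemma F4x: assumes x: "x \<in> U"
  shows "(\<Sum>c\<in>UNIV. pd (\<lambda>z. J z c b) a x * g x c d + J x c b * pd (\<lambda>z. g z c d) a x
      + pd (\<lambda>z. J z c d) a x * g x c b + J x c d * pd (\<lambda>z. g z c b) a x) = 0"
proof -
  have "pd (\<lambda>z. (\<Sum>c\<in>UNIV. g z c d * J z c b) + (\<Sum>c\<in>UNIV. g z c b * J z c d)) a x = 0"
    by (rule pd_const_open[OF opn x]) (rule omega_anti)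
  moreover have "pd (\<lambda>z. (\<Sum>c\<in>UNIV. g z c d * J z c b) + (\<Sum>c\<in>UNIV. g z c b * J z c d)) a x
    = pd (\<lambda>z. (\<Sum>c\<in>UNIV. g z c d * J z c b)) a x + pd (\<lambda>z. (\<Sum>c\<in>UNIV. g z c b * J z c d)) a x"
    by (rule pd_add) (use dgx dJx x in auto)
  moreover have "pd (\<lambda>z. (\<Sum>c\<in>UNIV. g z c d * J z c b)) a x = (\<Sum>c\<in>UNIV. g x c d * pd (\<lambda>z. J z c b) a x + pd (\<lambda>z. g z c d) a x * J x c b)"
    by (rule pd_sum_mult_diff) (use dgx dJx x in auto)
  moreover have "pd (\<lambda>z. (\<Sum>c\<in>UNIV. g z c b * J z c d)) a x = (\<Sum>c\<in>UNIV. g x c b * pd (\<lambda>z. J z c d) a x + pd (\<lambda>z. g z c b) a x * J x c d)"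
    by (rule pd_sum_mult_diff) (use dgx dJx x in auto)
  ultimately show ?thesis by (simp add: sum.distrib[symmetric] algebra_simps)
qed

lemma GIx: assumes x: "x \<in> U"
  shows "(\<Sum>c\<in>UNIV. g x b c * ginv g x c l) = kdelta b l"
proof -
  have ker: "\<forall>v. Gm g x *v v = 0 \<longrightarrow> v = 0"
  proof (intro allI impI)
    fix v assume "Gm g x *v v = 0"
    then have "v \<bullet> (Gm g x *v v) = 0" by simp
    then show "v = 0" using Gpos_v[OF x, of v] by (metis less_irrefl)
  qed
  then have "invertible (Gm g x)" using matrix_left_invertible_ker invertible_left_inverse by blast
  then have "Gm g x ** matrix_inv (Gm g x) = mat 1"
    unfolding invertible_def matrix_inv_def by (rule someI_ex[where P="\<lambda>A'. Gm g x ** A' = mat 1 \<and> A' ** Gm g x = mat 1", THEN conjunct1])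
  then have "(Gm g x ** matrix_inv (Gm g x))$b$l = (mat 1 :: real^'n^'n)$b$l" by simp
  then show ?thesis by (simp add: matrix_matrix_mult_def Gm_def ginv_def mat_def kdelta_def)
qed

end


lemma pd_const0: "pd (\<lambda>y. c) a x = 0" by (simp add: pd_def)

lemma Jv_comp: "Jv J y w $ b = (\<Sum>e\<in>UNIV. J y b e * w$e)" by (simp add: Jv_def)

lemma Pm_mv: "(Pm J x y *v w)$b = (\<Sum>a\<in>UNIV. y$a * (\<Sum>e\<in>UNIV. pd (\<lambda>z. J z b e) a x * w$e))"
proof -
  have "(Pm J x y *v w)$b = (\<Sum>e\<in>UNIV. \<Sum>a\<in>UNIV. y$a * pd (\<lambda>z. J z b e) a x * w$e)"
    by (simp add: Pm_def matrix_vector_mult_def sum_distrib_right)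
  also have "\<dots> = (\<Sum>a\<in>UNIV. \<Sum>e\<in>UNIV. y$a * pd (\<lambda>z. J z b e) a x * w$e)" by (rule sum.swap)
  finally show ?thesis by (simp add: sum_distrib_left mult.assoc)
qed

context
  fixes U and g J :: "'n::finite tens2"
  assumes CAH: "conf_almost_hermitian U g J"
begin

lemma pdJv: "x \<in> U \<Longrightarrow> pd (\<lambda>y. Jv J y w $ b) a x = (\<Sum>e\<in>UNIV. pd (\<lambda>z. J z b e) a x * w$e)"
  unfolding Jv_comp
  apply (subst pd_sum)
   apply (rule differentiable_mult, rule dJx[OF CAH], assumption, simp)
  apply (rule sum.cong[OF refl], rule pd_cmult, rule dJx[OF CAH], assumption)
  done

lemma Nc: assumes x: "x \<in> U"
  and NJ: "\<forall>X Y. smooth_field X U \<longrightarrow> smooth_field Y U \<longrightarrow> (\<forall>x\<in>U. nijenhuis J X Y x = 0)"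
  shows "Pm J x (Jm J x *v v) *v w - Pm J x (Jm J x *v w) *v v + Jm J x *v (Pm J x w *v v) - Jm J x *v (Pm J x v *v w) = 0"
proof -
  have N: "nijenhuis J (\<lambda>y. v) (\<lambda>y. w) x = 0" using NJ smooth_const_field x by blast
  have l1: "lie (Jfield J (\<lambda>y. v)) (Jfield J (\<lambda>y. w)) x = Pm J x (Jm J x *v v) *v w - Pm J x (Jm J x *v w) *v v"
    unfolding L3a[symmetric] by (simp add: vec_eq_iff lie_def Jfield_def pdJv[OF x] Pm_mv sum_subtractf)
  have l2: "lie (Jfield J (\<lambda>y. v)) (\<lambda>y. w) x = - (Pm J x w *v v)"
    by (simp add: vec_eq_iff lie_def Jfield_def pdJv[OF x] Pm_mv pd_const0 sum_negf)
  have l3: "lie (\<lambda>y. v) (Jfield J (\<lambda>y. w)) x = Pm J x v *v w"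
    by (simp add: vec_eq_iff lie_def Jfield_def pdJv[OF x] Pm_mv pd_const0)
  have l4: "lie (\<lambda>y. v) (\<lambda>y. w) x = 0"
    by (simp add: vec_eq_iff lie_def pd_const0)
  from N have "(1/4::real) *\<^sub>R (Pm J x (Jm J x *v v) *v w - Pm J x (Jm J x *v w) *v v - Jm J x *v (- (Pm J x w *v v)) - Jm J x *v (Pm J x v *v w) - 0) = 0"
    unfolding nijenhuis_def l1 l2 l3 l4 L3a .
  then have "Pm J x (Jm J x *v v) *v w - Pm J x (Jm J x *v w) *v v - Jm J x *v (- (Pm J x w *v v)) - Jm J x *v (Pm J x v *v w) - 0 = 0"
    by (simp only: scaleR_eq_0_iff) simp
  then show ?thesis unfolding mv_neg by (simp add: algebra_simps)
qed

lemma Aii_x: assumes x: "x \<in> U"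
  shows "(Am g J x y *v u) \<bullet> (Gm g x *v v) = - (u \<bullet> (Gm g x *v (Am g J x y *v v)))"
proof -
  have "(Am g J x y *v u) \<bullet> (Gm g x *v v) + u \<bullet> (Gm g x *v (Am g J x y *v v)) = 0"
    unfolding L1
  proof (rule Aii_abs)
    show "\<And>u v. u \<bullet> (Gm g x *v v) = v \<bullet> (Gm g x *v u)" by (rule V_Gsym) (use gsx[OF CAH x] in auto)
    show "\<And>u v. (Jm J x *v u) \<bullet> (Gm g x *v v) = - (u \<bullet> (Gm g x *v (Jm J x *v v)))"
      by (rule V_Jskew) (use J2x[OF CAH x] Hx[OF CAH x] in auto)
    show "\<And>u v. (Gam g J x y *v u) \<bullet> (Gm g x *v v) + u \<bullet> (Gm g x *v (Gam g J x y *v v)) =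
      u \<bullet> (Qm g x y *v v) - 2 * bet g J x y * (u \<bullet> (Gm g x *v v))"
      by (rule F2v, rule F2c) (use gsx[OF CAH x] dg_sym[OF CAH x] GIx[OF CAH x] in auto)
    show "\<And>u v. (Pm J x y *v u) \<bullet> (Gm g x *v v) + (Jm J x *v u) \<bullet> (Qm g x y *v v) +
           (Pm J x y *v v) \<bullet> (Gm g x *v u) + (Jm J x *v v) \<bullet> (Qm g x y *v u) = 0"
      by (rule F4v) (use F4x[OF CAH x] in auto)
    show "\<And>u v. u \<bullet> (Qm g x y *v v) = v \<bullet> (Qm g x y *v u)"
      by (rule Qsym_v) (use dg_sym[OF CAH x] in auto)
  qed
  then show ?thesis by (simp add: eq_neg_iff_add_eq_0)
qed

lemma Gc_inv: assumes x: "x \<in> U"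
  and NJ: "\<forall>X Y. smooth_field X U \<longrightarrow> smooth_field Y U \<longrightarrow> (\<forall>x\<in>U. nijenhuis J X Y x = 0)"
  shows "Gc g J x (Jv J x v) (Jv J x w) = Gc g J x v w"
proof -
  have "Am g J x (Jm J x *v w) *v (Jm J x *v v) = Am g J x w *v v"
  proof (rule abstract_core)
    show "\<And>u. Jm J x *v (Jm J x *v u) = - u" by (rule V_J2) (use J2x[OF CAH x] in auto)
    show "\<And>u v. u \<bullet> (Gm g x *v v) = v \<bullet> (Gm g x *v u)" by (rule V_Gsym) (use gsx[OF CAH x] in auto)
    show "\<And>u. u \<noteq> 0 \<Longrightarrow> 0 < u \<bullet> (Gm g x *v u)" by (rule Gpos_v[OF CAH x])
    show "\<And>u v. (Jm J x *v u) \<bullet> (Gm g x *v v) = - (u \<bullet> (Gm g x *v (Jm J x *v v)))"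
      by (rule V_Jskew) (use J2x[OF CAH x] Hx[OF CAH x] in auto)
    show "\<And>y u. Jm J x *v (Am g J x y *v u) = - (Am g J x y *v (Jm J x *v u))"
      by (rule Ai) (use J2x[OF CAH x] F3x[OF CAH x] in auto)
    show "\<And>y u v. (Am g J x y *v u) \<bullet> (Gm g x *v v) = - (u \<bullet> (Gm g x *v (Am g J x y *v v)))"
      by (rule Aii_x[OF x])
    show "\<And>v w. Am g J x (Jm J x *v v) *v w - Am g J x (Jm J x *v w) *v v + Jm J x *v (Am g J x w *v v) -
           Jm J x *v (Am g J x v *v w) = 0"
      by (rule Aiii) (use J2x[OF CAH x] gsx[OF CAH x] dg_sym[OF CAH x] Nc[OF x NJ] in auto)
  qed
  then show ?thesis unfolding L3b L3a by simp
qed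

lemma torsion_Gc: assumes x: "x \<in> U"
  shows "torsion (conn_gc g J) X Y x = Gc g J x (Y x) (X x) - Gc g J x (X x) (Y x)"
proof -
  have sym: "GamC g J x b a d = GamC g J x b d a" for b a d
    by (rule GamC_sym) (use gsx[OF CAH x] dg_sym[OF CAH x] in auto)
  have "conn_c g J X Y x - conn_c g J Y X x - lie X Y x = 0"
  proof -
    have "(\<Sum>a\<in>UNIV. \<Sum>d\<in>UNIV. GamC g J x b a d * Y x $ a * X x $ d) = (\<Sum>a\<in>UNIV. \<Sum>d\<in>UNIV. GamC g J x b a d * X x $ a * Y x $ d)" for b
    proof -
      have "(\<Sum>a\<in>UNIV. \<Sum>d\<in>UNIV. GamC g J x b a d * Y x $ a * X x $ d) = (\<Sum>d\<in>UNIV. \<Sum>a\<in>UNIV. GamC g J x b a d * Y x $ a * X x $ d)"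
        by (rule sum.swap)
      also have "\<dots> = (\<Sum>d\<in>UNIV. \<Sum>a\<in>UNIV. GamC g J x b d a * X x $ d * Y x $ a)"
        using sym by (simp add: algebra_simps)
      finally show ?thesis .
    qed
    then show ?thesis by (simp add: vec_eq_iff conn_c_def lie_def sum_subtractf)
  qed
  then show ?thesis unfolding torsion_def conn_gc_def by (simp add: algebra_simps)
qed

end

theorem proposition4p6:
  fixes U :: "(real^'n::finite) set" and g J :: "'n tens2"
  assumes "CARD('n) \<ge> 4"
    and "conf_almost_hermitian U g J"
    and "\<forall>X Y. smooth_field X U \<longrightarrow> smooth_field Y U \<longrightarrow> (\<forall>x\<in>U. nijenhuis J X Y x = 0)"
  shows "(\<forall>x\<in>U. \<forall>v w. Gcminus g J x v w = 0)
    \<and> (\<forall>X Y. smooth_field X U \<longrightarrow> smooth_field Y U \<longrightarrow>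
         (\<forall>x\<in>U. torsion (conn_gc g J) (Jfield J X) (Jfield J Y) x = torsion (conn_gc g J) X Y x))"
proof (intro conjI allI ballI impI)
  fix x v w assume x: "x \<in> U"
  show "Gcminus g J x v w = 0"
    unfolding Gcminus_def Gc_inv[OF assms(2) x assms(3)] by simp
next
  fix X Y x assume x: "x \<in> U"
  show "torsion (conn_gc g J) (Jfield J X) (Jfield J Y) x = torsion (conn_gc g J) X Y x"
    unfolding torsion_Gc[OF assms(2) x] Jfield_def Gc_inv[OF assms(2) x assms(3)] by simp
qed


end
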